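(* Let $k$ be a field with $\mathrm{char}(k)\ne2$ and let $n\ge4$. There exists an $n\times n$ quantum parameter matrix $\mathfrak{q}$ such that $\mathrm{Aut}_{\mathrm{gr}}(S_{\mathfrak{q}}(k^n))\cong(k^\times)^n\rtimes D_{2n}$.
   Context: An $n\times n$ quantum parameter matrix is a matrix $\mathfrak{q}=(q_{ij})$ over $k$ with $q_{ii}=1$ and $q_{ij}q_{ji}=1$ for all $i,j$. $S_{\mathfrak{q}}(k^n)$ is the $k$-algebra generated by the standard basis $v_1,\dots,v_n$ of $k^n$ with relations $v_jv_i=q_{ij}v_iv_j$, graded by $\deg v_i=1$; $\mathrm{Aut}_{\mathrm{gr}}$ denotes its group of degree-preserving algebra automorphisms, viewed as a subgroup of $\mathrm{GL}(n,k)$. $D_{2n}$ is the dihedral group of order $2n$, viewed as the subgroup of $\mathfrak{S}_n$ generated by $(1\,2\,\cdots\,n)$ and $i\mapsto 1-i \bmod n$; in $(k^\times)^n\rtimes D_{2n}$, $(k^\times)^n$ is the group of invertible diagonal matrices and $D_{2n}$ acts by permuting coordinates (the product is realized as a group of monomial matrices). *)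

theory Defs
  imports "Jordan_Normal_Form.Matrix" "HOL-Algebra.Sym_Groups"
begin

definition quantum_param :: "nat \<Rightarrow> 'k::field mat \<Rightarrow> bool" where
  "quantum_param n q \<longleftrightarrow> q \<in> carrier_mat n n \<and> (\<forall>i<n. q $$ (i,i) = 1)
     \<and> (\<forall>i<n. \<forall>j<n. q $$ (i,j) * q $$ (j,i) = 1)"

(* Elements of k^n (x) k^n are encoded as n x n matrices T, T = sum T_ab v_a (x) v_b.
   The defining relation v_j v_i - q_ij v_i v_j of S_q(k^n) is the tensor
   v_j (x) v_i - q_ij v_i (x) v_j. *)
definition rel_tensor :: "nat \<Rightarrow> 'k::field mat \<Rightarrow> nat \<Rightarrow> nat \<Rightarrow> 'k mat" where
  "rel_tensor n q i j = mat n n (\<lambda>(a,b). (if (a,b) = (j,i) then 1 else 0)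
                                        - (if (a,b) = (i,j) then q $$ (i,j) else 0))"

(* R = span of the relations, the degree-2 part of the ideal of relations
   (S_q(k^n) = T(k^n)/(R)). *)
definition rel_space :: "nat \<Rightarrow> 'k::field mat \<Rightarrow> 'k mat set" where
  "rel_space n q = {T. T \<in> carrier_mat n n \<and> (\<exists>c. \<forall>a<n. \<forall>b<n.
      T $$ (a,b) = (\<Sum>i<n. \<Sum>j<n. c i j * rel_tensor n q i j $$ (a,b)))}"

(* g (x) g acting on k^n (x) k^n, in the matrix encoding: T |-> g T g^t,
   where g v_a = sum_l g_la v_l. *)
definition preserves_rel :: "nat \<Rightarrow> 'k::field mat \<Rightarrow> 'k mat \<Rightarrow> bool" where
  "preserves_rel n q g \<longleftrightarrow> (\<forall>T \<in> rel_space n q. g * T * transpose_mat g \<in> rel_space n q)"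

(* Aut_gr(S_q(k^n)) as a subgroup of GL(n,k): a linear map g of k^n = degree-1 part
   extends to an algebra endomorphism of the quadratic algebra iff (g (x) g)(R) \<subseteq> R;
   it is a graded automorphism iff it is bijective, i.e. g is invertible and its
   inverse also extends to an algebra endomorphism. *)
definition Aut_gr :: "nat \<Rightarrow> 'k::field mat \<Rightarrow> 'k mat monoid" where
  "Aut_gr n q = \<lparr> carrier = {g \<in> carrier_mat n n. \<exists>h \<in> carrier_mat n n.
        g * h = 1\<^sub>m n \<and> h * g = 1\<^sub>m n \<and> preserves_rel n q g \<and> preserves_rel n q h},
      mult = (*), one = 1\<^sub>m n \<rparr>"

(* Dihedral group D_2n inside S_n (permutations of {1..n}), generated by the
   n-cycle (1 2 ... n) and the reflection i |-> 1 - i mod n. *)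
definition rot_perm :: "nat \<Rightarrow> nat \<Rightarrow> nat" where
  "rot_perm n i = (if 1 \<le> i \<and> i < n then i + 1 else if i = n then 1 else i)"

definition refl_perm :: "nat \<Rightarrow> nat \<Rightarrow> nat" where
  "refl_perm n i = (if 1 \<le> i \<and> i \<le> n then
      (if (n + 1 - i) mod n = 0 then n else (n + 1 - i) mod n) else i)"

definition dihedral :: "nat \<Rightarrow> (nat \<Rightarrow> nat) set" where
  "dihedral n = generate (sym_group n) {rot_perm n, refl_perm n}"

(* Permutation matrix of sigma (a permutation of {1..n}), sending e_j to e_sigma(j);
   matrix indices are 0-based, so entry (a,b) corresponds to (a+1,b+1). *)
definition perm_matrix :: "nat \<Rightarrow> (nat \<Rightarrow> nat) \<Rightarrow> 'k::field mat" where
  "perm_matrix n \<sigma> = mat n n (\<lambda>(a,b). if a + 1 = \<sigma> (b + 1) then 1 else 0)"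

definition diag_matrix :: "nat \<Rightarrow> (nat \<Rightarrow> 'k::field) \<Rightarrow> 'k mat" where
  "diag_matrix n d = mat n n (\<lambda>(a,b). if a = b then d a else 0)"

(* (k^x)^n \<rtimes> D_2n realized as the group of monomial matrices diag(d) * P_sigma. *)
definition monomial_dihedral :: "nat \<Rightarrow> 'k::field mat monoid" where
  "monomial_dihedral n = \<lparr> carrier = {diag_matrix n d * perm_matrix n \<sigma> | d \<sigma>.
        (\<forall>i<n. d i \<noteq> 0) \<and> \<sigma> \<in> dihedral n},
      mult = (*), one = 1\<^sub>m n \<rparr>"

end

theory Submission
  imports Defs "Jordan_Normal_Form.Determinant"
begin

lemma rt_entry:
  assumes "a < n" "b < n" "i < n" "j < n"
  shows "rel_tensor n q i j $$ (a,b) = (if a = j \<and> b = i then 1 else 0) - (if a = i \<and> b = j then q $$ (i,j) else 0)"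
  using assms by (auto simp: rel_tensor_def)

lemma rt_sum:
  assumes "a < n" "b < n"
  shows "(\<Sum>i<n. \<Sum>j<n. c i j * rel_tensor n q i j $$ (a,b)) = c b a - q $$ (a,b) * c a b"
proof -
  have "(\<Sum>i<n. \<Sum>j<n. c i j * rel_tensor n q i j $$ (a,b))
     = (\<Sum>i<n. (\<Sum>j<n. if j = a then (if i = b then c i j else 0) else 0) - (\<Sum>j<n. if j = b then (if i = a then c i j * q $$ (i,j) else 0) else 0))"
    unfolding sum_subtractf[symmetric]
    by (intro sum.cong refl) (simp add: rt_entry assms right_diff_distrib)
  also have "\<dots> = (\<Sum>i<n. (if i = b then c i a else 0) - (if i = a then c i b * q $$ (i,b) else 0))"
    using assms by (simp only: sum.delta lessThan_iff finite_lessThan if_True)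
  also have "\<dots> = c b a - q $$ (a,b) * c a b"
    using assms by (simp add: sum_subtractf sum.delta)
  finally show ?thesis .
qed
lemma rel_space_char:
  fixes q :: "'k::field mat"
  assumes qp: "quantum_param n q" and two: "(2::'k) \<noteq> 0"
  shows "rel_space n q = {T \<in> carrier_mat n n. \<forall>a<n. \<forall>b<n. T $$ (a,b) + q $$ (a,b) * T $$ (b,a) = 0}"
proof (intro equalityI subsetI)
  fix T assume "T \<in> rel_space n q"
  then obtain c where T: "T \<in> carrier_mat n n" and c: "\<forall>a<n. \<forall>b<n.
      T $$ (a,b) = (\<Sum>i<n. \<Sum>j<n. c i j * rel_tensor n q i j $$ (a,b))"
    unfolding rel_space_def by auto
  have "T $$ (a,b) + q $$ (a,b) * T $$ (b,a) = 0" if "a < n" "b < n" for a b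
  proof -
    have qq: "q $$ (a,b) * q $$ (b,a) = 1" using qp that unfolding quantum_param_def by auto
    have e1: "T $$ (a,b) = c b a - q $$ (a,b) * c a b" using c that rt_sum[of a n b c q] by simp
    have e2: "T $$ (b,a) = c a b - q $$ (b,a) * c b a" using c that rt_sum[of b n a c q] by simp
    have "T $$ (a,b) + q $$ (a,b) * T $$ (b,a) = c b a * (1 - q $$ (a,b) * q $$ (b,a))"
      unfolding e1 e2 by (simp add: algebra_simps)
    then show ?thesis using qq by simp
  qed
  then show "T \<in> {T \<in> carrier_mat n n. \<forall>a<n. \<forall>b<n. T $$ (a,b) + q $$ (a,b) * T $$ (b,a) = 0}"
    using T by auto
next
  fix T assume "T \<in> {T \<in> carrier_mat n n. \<forall>a<n. \<forall>b<n. T $$ (a,b) + q $$ (a,b) * T $$ (b,a) = 0}"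
  then have T: "T \<in> carrier_mat n n" and A: "\<And>a b. a<n \<Longrightarrow> b<n \<Longrightarrow> T $$ (a,b) + q $$ (a,b) * T $$ (b,a) = 0"
    by auto
  define c where "c = (\<lambda>i j. if i < j then T $$ (j,i) else (0::'k))"
  have "T $$ (a,b) = (\<Sum>i<n. \<Sum>j<n. c i j * rel_tensor n q i j $$ (a,b))" if "a < n" "b < n" for a b
  proof -
    have qaa: "q $$ (a,a) = 1" using qp that unfolding quantum_param_def by auto
    have "T $$ (a,b) = c b a - q $$ (a,b) * c a b"
    proof (cases a b rule: linorder_cases)
      case less
      then show ?thesis using A[OF that] by (simp add: c_def eq_neg_iff_add_eq_0)
    next
      case equal
      then have "T $$ (a,a) + T $$ (a,a) = 0" using A[OF that] qaa by simp
      then have "2 * T $$ (a,a) = 0" by (metis mult_2)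
      then show ?thesis using two equal by (simp add: c_def)
    next
      case greater
      then show ?thesis by (simp add: c_def)
    qed
    then show ?thesis using rt_sum[OF that, of c q] by simp
  qed
  then show "T \<in> rel_space n q" using T unfolding rel_space_def by blast
qed


lemma gTg_entry:
  assumes g: "g \<in> carrier_mat n n" and T: "T \<in> carrier_mat n n" and ab: "a < n" "b < n"
  shows "(g * T * transpose_mat g) $$ (a,b) = (\<Sum>c<n. (\<Sum>e<n. g $$ (a,e) * T $$ (e,c)) * g $$ (b,c))"
proof -
  have "(g * T * transpose_mat g) $$ (a,b) = row (g * T) a \<bullet> col (transpose_mat g) b"
    using g T ab by (intro index_mult_mat(1)) auto
  also have "\<dots> = (\<Sum>c<n. (\<Sum>e<n. g $$ (a,e) * T $$ (e,c)) * g $$ (b,c))"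
    using g T ab by (simp add: scalar_prod_def atLeast0LessThan)
  finally show ?thesis .
qed

definition Cnd :: "'k::field mat \<Rightarrow> 'k mat \<Rightarrow> nat \<Rightarrow> nat \<Rightarrow> nat \<Rightarrow> nat \<Rightarrow> 'k" where
  "Cnd q g i j a b = (g$$(a,j)*g$$(b,i) - q$$(i,j)*(g$$(a,i)*g$$(b,j)))
      + q$$(a,b)*(g$$(b,j)*g$$(a,i) - q$$(i,j)*(g$$(b,i)*g$$(a,j)))"

lemma g_rt_entry:
  assumes g: "g \<in> carrier_mat n n" and ab: "a < n" "b < n" and ij: "i < n" "j < n"
  shows "(g * rel_tensor n q i j * transpose_mat g) $$ (a,b) = g$$(a,j)*g$$(b,i) - q$$(i,j)*(g$$(a,i)*g$$(b,j))"
proof -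
  have rt: "rel_tensor n q i j \<in> carrier_mat n n" by (simp add: rel_tensor_def)
  have inner: "(\<Sum>e<n. g $$ (a,e) * rel_tensor n q i j $$ (e,c)) =
      (if c = i then g $$ (a,j) else 0) - (if c = j then q$$(i,j) * g $$ (a,i) else 0)" if "c < n" for c
  proof -
    have "(\<Sum>e<n. g $$ (a,e) * rel_tensor n q i j $$ (e,c)) =
       (\<Sum>e<n. (if e = j then (if c = i then g $$ (a,e) else 0) else 0) - (if e = i then (if c = j then q$$(i,j) * g $$ (a,e) else 0) else 0))"
      using that ij by (intro sum.cong refl) (simp add: rt_entry right_diff_distrib)
    also have "\<dots> = (if c = i then g $$ (a,j) else 0) - (if c = j then q$$(i,j) * g $$ (a,i) else 0)"
      using ij by (simp only: sum_subtractf sum.delta lessThan_iff finite_lessThan if_True)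
    finally show ?thesis .
  qed
  have "(g * rel_tensor n q i j * transpose_mat g) $$ (a,b) =
     (\<Sum>c<n. (if c = i then g $$ (a,j) * g $$ (b,c) else 0) - (if c = j then q$$(i,j) * g $$ (a,i) * g $$ (b,c) else 0))"
    unfolding gTg_entry[OF g rt ab] by (intro sum.cong refl) (simp add: inner left_diff_distrib)
  also have "\<dots> = g$$(a,j)*g$$(b,i) - q$$(i,j)*(g$$(a,i)*g$$(b,j))"
    using ij by (simp only: sum_subtractf sum.delta' sum.delta lessThan_iff finite_lessThan if_True) (simp add: mult.assoc)
  finally show ?thesis .
qed

lemma rt_antisym:
  fixes q :: "'k::field mat"
  assumes "x < n" "y < n" "i < n" "j < n" and q1: "q $$ (i,j) * q $$ (j,i) = 1" and qii: "q $$ (i,i) = 1"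
  shows "rel_tensor n q i j $$ (x,y) + q $$ (x,y) * rel_tensor n q i j $$ (y,x) = 0"
proof (cases "i = j")
  case True
  then show ?thesis using assms by (simp add: rt_entry)
next
  case ne: False
  consider (A) "x = j" "y = i" | (B) "x = i" "y = j" | (C) "\<not> (x = j \<and> y = i)" "\<not> (x = i \<and> y = j)" by blast
  then show ?thesis
  proof cases
    case A
    then show ?thesis using assms ne by (simp add: rt_entry mult.commute)
  next
    case B
    then show ?thesis using assms ne by (simp add: rt_entry)
  next
    case C
    then show ?thesis using assms ne by (simp add: rt_entry) (metis)
  qed
qed

lemma preserves_Cnd:
  fixes q :: "'k::field mat"
  assumes qp: "quantum_param n q" and two: "(2::'k) \<noteq> 0" and g: "g \<in> carrier_mat n n"
    and P: "preserves_rel n q g" and idx: "i < n" "j < n" "a < n" "b < n"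
  shows "Cnd q g i j a b = 0"
proof -
  have qq: "q $$ (x,y) * q $$ (y,x) = 1" if "x < n" "y < n" for x y
    using qp that unfolding quantum_param_def by auto
  have "rel_tensor n q i j \<in> rel_space n q"
  proof -
    have "rel_tensor n q i j $$ (x,y) + q $$ (x,y) * rel_tensor n q i j $$ (y,x) = 0" if "x < n" "y < n" for x y
    proof -
      have "q $$ (i,i) = 1" using qp idx unfolding quantum_param_def by auto
      then show ?thesis using that idx qq[of i j] by (intro rt_antisym)
    qed
    moreover have "rel_tensor n q i j \<in> carrier_mat n n" by (simp add: rel_tensor_def)
    ultimately show ?thesis unfolding rel_space_char[OF qp two] by blast
  qed
  then have "g * rel_tensor n q i j * transpose_mat g \<in> rel_space n q" using P unfolding preserves_rel_def by blast
  then have "(g * rel_tensor n q i j * transpose_mat g) $$ (a,b) + q $$ (a,b) * (g * rel_tensor n q i j * transpose_mat g) $$ (b,a) = 0"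
    unfolding rel_space_char[OF qp two] using idx by blast
  then show ?thesis unfolding Cnd_def g_rt_entry[OF g idx(3,4) idx(1,2)] g_rt_entry[OF g idx(4,3) idx(1,2)] .
qed

lemma Cnd_preserves:
  fixes q :: "'k::field mat"
  assumes qp: "quantum_param n q" and two: "(2::'k) \<noteq> 0" and g: "g \<in> carrier_mat n n"
    and C: "\<And>i j a b. i < n \<Longrightarrow> j < n \<Longrightarrow> a < n \<Longrightarrow> b < n \<Longrightarrow> Cnd q g i j a b = 0"
  shows "preserves_rel n q g"
  unfolding preserves_rel_def
proof
  fix T assume "T \<in> rel_space n q"
  then have Tc: "T \<in> carrier_mat n n" and A: "\<And>a b. a < n \<Longrightarrow> b < n \<Longrightarrow> T$$(a,b) + q$$(a,b)*T$$(b,a) = 0"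
    unfolding rel_space_char[OF qp two] by auto
  have gc: "g * T * transpose_mat g \<in> carrier_mat n n" using g Tc by auto
  have ent: "(g * T * transpose_mat g) $$ (a,b) = (\<Sum>e<n. \<Sum>c<n. T$$(e,c) * (g$$(a,e)*g$$(b,c)))"
    if "a < n" "b < n" for a b
  proof -
    have "(\<Sum>c<n. (\<Sum>e<n. g $$ (a,e) * T $$ (e,c)) * g $$ (b,c)) = (\<Sum>c<n. \<Sum>e<n. T$$(e,c) * (g$$(a,e)*g$$(b,c)))"
      unfolding sum_distrib_right by (simp add: mult_ac)
    also have "\<dots> = (\<Sum>e<n. \<Sum>c<n. T$$(e,c) * (g$$(a,e)*g$$(b,c)))" by (rule sum.swap)
    finally show ?thesis unfolding gTg_entry[OF g Tc that] .
  qed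
  have "(g * T * transpose_mat g) $$ (a,b) + q$$(a,b) * (g * T * transpose_mat g) $$ (b,a) = 0"
    if ab: "a < n" "b < n" for a b
  proof -
    define f where "f e c = T$$(e,c) * (g$$(a,e)*g$$(b,c) + q$$(a,b)*(g$$(b,e)*g$$(a,c)))" for e c
    have S: "(g * T * transpose_mat g) $$ (a,b) + q$$(a,b) * (g * T * transpose_mat g) $$ (b,a)
       = (\<Sum>e<n. \<Sum>c<n. f e c)"
      unfolding ent[OF ab] ent[OF ab(2,1)] f_def
      by (simp add: sum.distrib sum_distrib_left algebra_simps)
    have sw: "(\<Sum>e<n. \<Sum>c<n. f e c) = (\<Sum>e<n. \<Sum>c<n. f c e)" by (rule sum.swap)
    have pair: "f e c + f c e = 0" if "e < n" "c < n" for e c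
    proof -
      have Tce: "T$$(c,e) = - (q$$(c,e) * T$$(e,c))" using A[OF that(2,1)] by (simp add: eq_neg_iff_add_eq_0)
      have "f e c + f c e = T$$(e,c) * Cnd q g c e a b"
        unfolding f_def Tce Cnd_def by (simp add: algebra_simps)
      then show ?thesis using C[OF that(2,1) ab] by simp
    qed
    have "(\<Sum>e<n. \<Sum>c<n. f e c) + (\<Sum>e<n. \<Sum>c<n. f e c) = 0"
      apply (subst (2) sw)
      unfolding sum.distrib[symmetric] using pair by simp
    then have "2 * (\<Sum>e<n. \<Sum>c<n. f e c) = 0" by (metis mult_2)
    then show ?thesis using S two by simp
  qed
  then show "g * T * transpose_mat g \<in> rel_space n q"
    unfolding rel_space_char[OF qp two] using gc by auto
qed
definition nb :: "nat \<Rightarrow> nat \<Rightarrow> nat \<Rightarrow> bool" where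
  "nb n x y \<longleftrightarrow> x + 1 = y \<or> y + 1 = x \<or> (x = 0 \<and> y + 1 = n) \<or> (y = 0 \<and> x + 1 = n)"

definition sc :: "nat \<Rightarrow> nat \<Rightarrow> nat" where "sc n x = (if x + 1 = n then 0 else x + 1)"
definition pd :: "nat \<Rightarrow> nat \<Rightarrow> nat" where "pd n x = (if x = 0 then n - 1 else x - 1)"

lemma nb_sym: "nb n x y = nb n y x" unfolding nb_def by auto

lemma nb_irrefl: "n \<ge> 3 \<Longrightarrow> \<not> nb n x x" unfolding nb_def by auto

lemma sc_pd:
  assumes "n \<ge> 3" "x < n"
  shows "sc n x < n" "pd n x < n" "nb n x (sc n x)" "nb n x (pd n x)" "sc n x \<noteq> pd n x"
  using assms unfolding sc_def pd_def nb_def by auto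

lemma nb_cases:
  assumes "n \<ge> 3" "x < n" "y < n" "nb n x y"
  shows "y = sc n x \<or> y = pd n x"
  using assms unfolding sc_def pd_def nb_def by auto

lemma nb_three:
  assumes "n \<ge> 3" "w < n" "x < n" "y < n" "z < n" "nb n w x" "nb n w y" "nb n w z" "x \<noteq> z" "y \<noteq> z"
  shows "x = y"
  using nb_cases[of n w x] nb_cases[of n w y] nb_cases[of n w z] assms by metis

definition edge :: "nat \<Rightarrow> nat \<Rightarrow> nat \<Rightarrow> bool" where
  "edge n x y \<longleftrightarrow> \<not> (x = y \<or> nb n x y)"

lemma common_nb:
  assumes n: "n \<ge> 4" and v: "v < n" and a: "a < n" and H: "\<And>y. y < n \<Longrightarrow> edge n v y \<Longrightarrow> edge n a y"
  shows "a = v"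
proof (rule ccontr)
  assume ne: "a \<noteq> v"
  show False
  proof (cases "nb n v a")
    case False
    then have "edge n v a" using ne unfolding edge_def by auto
    then have "edge n a a" using H a by blast
    then show False unfolding edge_def by auto
  next
    case True
    then have "a = sc n v \<or> a = pd n v" using nb_cases n v a by auto
    then show False
    proof
      assume A: "a = sc n v"
      have "edge n v (sc n a)" using A n v unfolding edge_def nb_def sc_def by auto
      moreover have "\<not> edge n a (sc n a)" using sc_pd[of n a] n a unfolding edge_def by auto
      moreover have "sc n a < n" using sc_pd[of n a] n a by auto
      ultimately show False using H by blast
    next
      assume A: "a = pd n v"
      have "edge n v (pd n a)" using A n v unfolding edge_def nb_def pd_def by auto
      moreover have "\<not> edge n a (pd n a)" using sc_pd[of n a] n a unfolding edge_def by auto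
      moreover have "pd n a < n" using sc_pd[of n a] n a by auto
      ultimately show False using H by blast
    qed
  qed
qed

lemma perm_nb_back:
  assumes n: "n \<ge> 3" and inj: "inj_on p {..<n}" and img: "\<And>x. x < n \<Longrightarrow> p x < n"
    and fw: "\<And>x y. x < n \<Longrightarrow> y < n \<Longrightarrow> nb n x y \<Longrightarrow> nb n (p x) (p y)"
    and xy: "x < n" "y < n" "nb n (p x) (p y)"
  shows "nb n x y"
proof -
  have s: "sc n x < n" "pd n x < n" "nb n x (sc n x)" "nb n x (pd n x)" "sc n x \<noteq> pd n x"
    using sc_pd[OF n xy(1)] by auto
  have ps: "p (sc n x) \<noteq> p (pd n x)" using inj s(1,2,5) by (auto dest: inj_onD)
  have "p y = p (sc n x) \<or> p y = p (pd n x)"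
  proof (rule ccontr)
    assume "\<not> ?thesis"
    then show False
      using nb_three[of n "p x" "p (sc n x)" "p (pd n x)" "p y"] n img xy s fw ps by auto
  qed
  then have "y = sc n x \<or> y = pd n x" using inj s xy by (auto dest: inj_onD)
  then show ?thesis using s by auto
qed


definition qm :: "nat \<Rightarrow> 'k::field mat" where
  "qm n = mat n n (\<lambda>(i,j). if i = j \<or> nb n i j then 1 else -1)"

lemma edge_sym: "edge n x y = edge n y x" unfolding edge_def using nb_sym by auto

lemma qm_entry: "i < n \<Longrightarrow> j < n \<Longrightarrow> qm n $$ (i,j) = (if edge n i j then -1 else 1)"
  unfolding qm_def edge_def by auto

lemma qm_param: "quantum_param n (qm n)"
  unfolding quantum_param_def
proof (intro conjI allI impI)
  show "qm n \<in> carrier_mat n n" by (simp add: qm_def)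
  fix i assume i: "i < n"
  show "qm n $$ (i,i) = 1" using i by (simp add: qm_entry edge_def)
  fix j assume j: "j < n"
  show "qm n $$ (i,j) * qm n $$ (j,i) = 1" using i j edge_sym[of n i j] by (simp add: qm_entry)
qed

lemma Cnd_alt: "Cnd q g i j a b = (1 - q$$(a,b)*q$$(i,j)) * (g$$(a,j)*g$$(b,i)) + (q$$(a,b) - q$$(i,j))*(g$$(a,i)*g$$(b,j))"
  unfolding Cnd_def by (simp add: algebra_simps)

lemma edge_zero:
  fixes g :: "'k::field mat"
  assumes two: "(2::'k) \<noteq> 0"
    and C: "\<And>i j a b. i < n \<Longrightarrow> j < n \<Longrightarrow> a < n \<Longrightarrow> b < n \<Longrightarrow> Cnd (qm n) g i j a b = 0"
    and idx: "i < n" "j < n" "a < n" "b < n" and e: "edge n i j" and ne: "\<not> edge n a b"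
  shows "g$$(a,j) * g$$(b,i) = 0"
proof -
  have qij: "qm n $$ (i,j) = (-1::'k)" using e idx by (simp add: qm_entry)
  have qab: "qm n $$ (a,b) = (1::'k)" using ne idx by (simp add: qm_entry)
  have qaa: "qm n $$ (x,x) = (1::'k)" if "x < n" for x using that by (simp add: qm_entry edge_def)
  have four: "(4::'k) \<noteq> 0" using two by (metis mult_eq_0_iff numeral_Bit0_eq_double numeral_times_numeral semiring_norm(12))
  have "Cnd (qm n) g i j x x = 4 * (g$$(x,i)*g$$(x,j))" if "x < n" for x
    unfolding Cnd_alt qij qaa[OF that] by (simp add: algebra_simps)
  then have z: "g$$(x,i)*g$$(x,j) = 0" if "x < n" for x using C[OF idx(1,2) that that] four that by simp
  have "Cnd (qm n) g i j a b = 2 * (g$$(a,j)*g$$(b,i) + g$$(a,i)*g$$(b,j))"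
    unfolding Cnd_alt qij qab by (simp add: algebra_simps)
  then have "2 * (g$$(a,j)*g$$(b,i) + g$$(a,i)*g$$(b,j)) = 0" using C[OF idx] by simp
  then have "g$$(a,j)*g$$(b,i) + g$$(a,i)*g$$(b,j) = 0" using two by (metis mult_eq_0_iff)
  then have s: "g$$(a,j)*g$$(b,i) = - (g$$(a,i)*g$$(b,j))"
    by (simp add: eq_neg_iff_add_eq_0)
  show ?thesis
  proof (rule ccontr)
    assume nz: "g$$(a,j) * g$$(b,i) \<noteq> 0"
    then have "g$$(a,i) \<noteq> 0" using s by auto
    moreover have "g$$(a,j) \<noteq> 0" using nz by auto
    ultimately show False using z[OF idx(3)] by simp
  qed
qed

definition monm :: "nat \<Rightarrow> (nat \<Rightarrow> nat) \<Rightarrow> (nat \<Rightarrow> 'k::field) \<Rightarrow> 'k mat" where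
  "monm n t e = mat n n (\<lambda>(a,b). if a = t b then e b else 0)"

lemma monm_carrier[simp]: "monm n t e \<in> carrier_mat n n" by (simp add: monm_def)
lemma monm_dims[simp]: "dim_row (monm n t e) = n" "dim_col (monm n t e) = n" by (simp_all add: monm_def)

lemma monm_entry: "a < n \<Longrightarrow> b < n \<Longrightarrow> monm n t e $$ (a,b) = (if a = t b then e b else 0)"
  by (simp add: monm_def)

lemma monm_cong: "(\<And>b. b < n \<Longrightarrow> t b = t' b) \<Longrightarrow> (\<And>b. b < n \<Longrightarrow> e b = e' b) \<Longrightarrow> monm n t e = monm n t' e'"
  by (intro eq_matI) (auto simp: monm_entry)

lemma monm_mult:
  assumes t2: "\<And>b. b < n \<Longrightarrow> t2 b < n"
  shows "monm n t1 e1 * monm n t2 e2 = monm n (t1 \<circ> t2) (\<lambda>b. e1 (t2 b) * e2 b)"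
proof (rule eq_matI)
  fix a c assume ac: "a < dim_row (monm n (t1 \<circ> t2) (\<lambda>b. e1 (t2 b) * e2 b))" "c < dim_col (monm n (t1 \<circ> t2) (\<lambda>b. e1 (t2 b) * e2 b))"
  then have a: "a < n" and c: "c < n" by (auto simp: monm_def)
  have "(monm n t1 e1 * monm n t2 e2) $$ (a,c) = (\<Sum>b\<in>{0..<n}. monm n t1 e1 $$ (a,b) * monm n t2 e2 $$ (b,c))"
    using a c by (simp add: scalar_prod_def)
  also have "\<dots> = (\<Sum>b\<in>{0..<n}. if b = t2 c then (if a = t1 b then e1 b else 0) * e2 c else 0)"
    using a c by (intro sum.cong refl) (auto simp: monm_entry)
  also have "\<dots> = (if a = t1 (t2 c) then e1 (t2 c) * e2 c else 0)"
    using t2[OF c] by (simp add: sum.delta)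
  finally show "(monm n t1 e1 * monm n t2 e2) $$ (a,c) = monm n (t1 \<circ> t2) (\<lambda>b. e1 (t2 b) * e2 b) $$ (a,c)"
    using a c by (simp add: monm_entry)
qed auto

lemma monm_id: "monm n (\<lambda>x. x) (\<lambda>_. 1) = (1\<^sub>m n :: 'k::field mat)"
  by (intro eq_matI) (auto simp: monm_entry)

lemma monm_Cnd:
  fixes e :: "nat \<Rightarrow> 'k::field"
  assumes te: "\<And>x y. x < n \<Longrightarrow> y < n \<Longrightarrow> edge n (t x) (t y) = edge n x y"
    and idx: "i < n" "j < n" "a < n" "b < n"
  shows "Cnd (qm n) (monm n t e) i j a b = 0"
proof -
  let ?q = "qm n :: 'k mat"
  have A: "?q$$(a,b) * ?q$$(i,j) = 1" if "a = t j" "b = t i"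
  proof -
    have "edge n a b = edge n i j" using that te[OF idx(2,1)] edge_sym[of n i j] by simp
    then show ?thesis using idx by (simp add: qm_entry)
  qed
  have B: "?q$$(a,b) = ?q$$(i,j)" if "a = t i" "b = t j"
  proof -
    have "edge n a b = edge n i j" using that te[OF idx(1,2)] by simp
    then show ?thesis using idx by (simp add: qm_entry)
  qed
  have "(1 - ?q$$(a,b)*?q$$(i,j)) * (monm n t e$$(a,j)*monm n t e$$(b,i)) = 0"
    using A idx by (cases "a = t j \<and> b = t i") (auto simp: monm_entry)
  moreover have "(?q$$(a,b) - ?q$$(i,j))*(monm n t e$$(a,i)*monm n t e$$(b,j)) = 0"
    using B idx by (cases "a = t i \<and> b = t j") (auto simp: monm_entry)
  ultimately show ?thesis unfolding Cnd_alt by (simp only: add_0)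
qed

definition tau :: "(nat \<Rightarrow> nat) \<Rightarrow> nat \<Rightarrow> nat" where "tau s x = s (Suc x) - 1"

definition Autc :: "nat \<Rightarrow> (nat \<Rightarrow> nat) set" where
  "Autc n = {s. s permutes {1..n} \<and> (\<forall>x<n. \<forall>y<n. nb n (tau s x) (tau s y) = nb n x y)}"

lemma tau_basic:
  assumes "s permutes {1..n}" "x < n"
  shows "tau s x < n" "Suc (tau s x) = s (Suc x)"
proof -
  have "s (Suc x) \<in> {1..n}" using assms permutes_in_image[OF assms(1)] by auto
  then show "tau s x < n" "Suc (tau s x) = s (Suc x)" unfolding tau_def by auto
qed

lemma tau_inj:
  assumes "s permutes {1..n}" "x < n" "y < n" "tau s x = tau s y"
  shows "x = y"
proof -
  have "s (Suc x) = s (Suc y)" using tau_basic[OF assms(1) assms(2)] tau_basic[OF assms(1) assms(3)] assms(4) by metis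
  then show ?thesis using permutes_inj[OF assms(1)] by (auto dest: injD)
qed

lemma Autc_perm: "s \<in> Autc n \<Longrightarrow> s permutes {1..n}" unfolding Autc_def by auto

lemma Autc_rule: "s \<in> Autc n \<Longrightarrow> x < n \<Longrightarrow> y < n \<Longrightarrow> nb n (tau s x) (tau s y) = nb n x y"
  unfolding Autc_def by blast

lemma AutcI: "s permutes {1..n} \<Longrightarrow> (\<And>x y. x < n \<Longrightarrow> y < n \<Longrightarrow> nb n (tau s x) (tau s y) = nb n x y) \<Longrightarrow> s \<in> Autc n"
  unfolding Autc_def by blast

lemma Autc_comp:
  assumes a1: "s1 \<in> Autc n" and a2: "s2 \<in> Autc n"
  shows "s1 \<circ> s2 \<in> Autc n"
proof -
  have p1: "s1 permutes {1..n}" and p2: "s2 permutes {1..n}" using assms Autc_perm by auto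
  have t: "tau (s1 \<circ> s2) x = tau s1 (tau s2 x)" if "x < n" for x
  proof -
    have "s2 (Suc x) = Suc (tau s2 x)" using tau_basic(2)[OF p2 that] by simp
    then show ?thesis unfolding tau_def by simp
  qed
  show ?thesis
  proof (rule AutcI)
    show "s1 \<circ> s2 permutes {1..n}" using permutes_compose[OF p2 p1] .
    fix x y assume xy: "x < n" "y < n"
    have "nb n (tau s1 (tau s2 x)) (tau s1 (tau s2 y)) = nb n (tau s2 x) (tau s2 y)"
      using Autc_rule[OF a1 tau_basic(1)[OF p2 xy(1)] tau_basic(1)[OF p2 xy(2)]] .
    also have "\<dots> = nb n x y" using Autc_rule[OF a2 xy] .
    finally show "nb n (tau (s1 \<circ> s2) x) (tau (s1 \<circ> s2) y) = nb n x y" unfolding t[OF xy(1)] t[OF xy(2)] .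
  qed
qed

lemma Autc_inv:
  assumes a: "s \<in> Autc n"
  shows "inv' s \<in> Autc n"
proof -
  have p: "s permutes {1..n}" using assms Autc_perm by auto
  have pi: "inv' s permutes {1..n}" using permutes_inv[OF p] .
  have t: "tau s (tau (inv' s) x) = x" if "x < n" for x
  proof -
    have "s (inv' s (Suc x)) = Suc x" using permutes_inverses(1)[OF p] .
    then have "s (Suc (tau (inv' s) x)) = Suc x" using tau_basic(2)[OF pi that] by simp
    then show ?thesis unfolding tau_def by simp
  qed
  show ?thesis
  proof (rule AutcI[OF pi])
    fix x y assume xy: "x < n" "y < n"
    have "nb n (tau s (tau (inv' s) x)) (tau s (tau (inv' s) y)) = nb n (tau (inv' s) x) (tau (inv' s) y)"
      using Autc_rule[OF a tau_basic(1)[OF pi xy(1)] tau_basic(1)[OF pi xy(2)]] .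
    then show "nb n (tau (inv' s) x) (tau (inv' s) y) = nb n x y" unfolding t[OF xy(1)] t[OF xy(2)] by simp
  qed
qed

lemma id_Autc: "id \<in> Autc n" unfolding Autc_def tau_def by (auto simp: permutes_id)

lemma perm_from_inj:
  fixes f :: "nat \<Rightarrow> nat"
  assumes "inj_on f {1..n}" "\<And>i. i \<in> {1..n} \<Longrightarrow> f i \<in> {1..n}" "\<And>i. i \<notin> {1..n} \<Longrightarrow> f i = i"
  shows "f permutes {1..n}"
proof (rule bij_imp_permutes)
  have "f ` {1..n} = {1..n}" using assms by (intro endo_inj_surj) auto
  then show "bij_betw f {1..n} {1..n}" using assms(1) unfolding bij_betw_def by auto
qed (use assms in auto)

lemma rot_Autc:
  assumes n: "n \<ge> 3"
  shows "rot_perm n \<in> Autc n"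
proof -
  have "rot_perm n permutes {1..n}"
    using n by (intro perm_from_inj) (auto simp: rot_perm_def inj_on_def split: if_splits)
  moreover have t: "tau (rot_perm n) x = sc n x" if "x < n" for x
    using that unfolding tau_def rot_perm_def sc_def by auto
  moreover have "nb n (sc n x) (sc n y) = nb n x y" if "x < n" "y < n" for x y
    using that n unfolding sc_def nb_def by auto
  ultimately show ?thesis unfolding Autc_def by auto
qed

lemma refl_formula: "refl_perm n i = (if 1 \<le> i \<and> i \<le> n then n + 1 - i else i)"
proof (cases "1 \<le> i \<and> i \<le> n")
  case True
  show ?thesis
  proof (cases "i = 1")
    case True then show ?thesis unfolding refl_perm_def by auto
  next
    case False
    then have "n + 1 - i < n" "n + 1 - i \<noteq> 0" using \<open>1 \<le> i \<and> i \<le> n\<close> by auto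
    then show ?thesis unfolding refl_perm_def using \<open>1 \<le> i \<and> i \<le> n\<close> by simp
  qed
next
  case False
  then show ?thesis by (subst refl_perm_def) (simp only: False if_False)
qed

lemma refl_Autc:
  assumes n: "n \<ge> 3"
  shows "refl_perm n \<in> Autc n"
proof -
  have "refl_perm n permutes {1..n}"
    by (rule perm_from_inj) (auto simp: refl_formula inj_on_def split: if_splits)
  moreover have t: "tau (refl_perm n) x = n - 1 - x" if "x < n" for x
    using that unfolding tau_def refl_formula by auto
  moreover have "nb n (n - 1 - x) (n - 1 - y) = nb n x y" if "x < n" "y < n" for x y
    using that n unfolding nb_def by auto
  ultimately show ?thesis unfolding Autc_def by auto
qed

lemma dihedral_Autc:
  assumes n: "n \<ge> 3" and s: "s \<in> dihedral n"
  shows "s \<in> Autc n"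
  using s unfolding dihedral_def
proof (induction rule: generate.induct)
  case one
  then show ?case unfolding sym_group_one by (rule id_Autc)
next
  case (incl h)
  then show ?case using rot_Autc[OF n] refl_Autc[OF n] by auto
next
  case (inv h)
  then have h: "h \<in> Autc n" using rot_Autc[OF n] refl_Autc[OF n] by auto
  then have "h \<in> carrier (sym_group n)" unfolding sym_group_def Autc_def by auto
  then show ?case using Autc_inv[OF h] by simp
next
  case (eng h1 h2)
  then show ?case unfolding sym_group_mult by (intro Autc_comp)
qed

definition rk :: "nat \<Rightarrow> nat \<Rightarrow> nat \<Rightarrow> nat" where
  "rk n k i = (if 1 \<le> i \<and> i \<le> n then (i - 1 + k) mod n + 1 else i)"

lemma rk_dihedral:
  assumes n: "n \<ge> 3"
  shows "rk n k \<in> dihedral n"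
proof (induction k)
  case 0
  have "rk n 0 = id" by (rule ext) (auto simp: rk_def)
  moreover have "id \<in> generate (sym_group n) {rot_perm n, refl_perm n}"
    using generate.one[of "sym_group n" "{rot_perm n, refl_perm n}"] unfolding sym_group_one .
  ultimately show ?case unfolding dihedral_def by (simp only:)
next
  case (Suc k)
  have "rk n (Suc k) = rot_perm n \<circ> rk n k"
  proof (rule ext)
    fix i
    show "rk n (Suc k) i = (rot_perm n \<circ> rk n k) i"
    proof (cases "1 \<le> i \<and> i \<le> n")
      case True
      define m where "m = (i - 1 + k) mod n"
      have m: "m < n" using n unfolding m_def by auto
      have "rk n (Suc k) i = Suc (i - 1 + k) mod n + 1" using True by (simp add: rk_def)
      also have "\<dots> = (if Suc m = n then 0 else Suc m) + 1" unfolding mod_Suc m_def by simp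
      also have "\<dots> = rot_perm n (m + 1)" using m unfolding rot_perm_def by auto
      also have "\<dots> = (rot_perm n \<circ> rk n k) i" using True by (simp add: rk_def m_def)
      finally show ?thesis .
    next
      case False
      then show ?thesis using n by (auto simp: rk_def rot_perm_def)
    qed
  qed
  moreover have "rot_perm n \<in> dihedral n" unfolding dihedral_def by (intro generate.incl) auto
  moreover have "rot_perm n \<circ> rk n k \<in> dihedral n"
    using generate.eng[of "rot_perm n" "sym_group n" "{rot_perm n, refl_perm n}" "rk n k"] Suc
      \<open>rot_perm n \<in> dihedral n\<close> unfolding sym_group_mult dihedral_def by blast
  ultimately show ?case by (simp only:)
qed

lemma tau_rk: "x < n \<Longrightarrow> tau (rk n k) x = (x + k) mod n"
  unfolding tau_def rk_def by simp

lemma tau_refl: "x < n \<Longrightarrow> tau (refl_perm n) x = n - 1 - x"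
  unfolding tau_def refl_formula by auto

lemma tau_comp: "s2 permutes {1..n} \<Longrightarrow> x < n \<Longrightarrow> tau (s1 \<circ> s2) x = tau s1 (tau s2 x)"
  using tau_basic(2)[of s2 n x] unfolding tau_def by (metis comp_apply)

lemma Autc_unique:
  assumes n: "n \<ge> 3" and a1: "s1 \<in> Autc n" and a2: "s2 \<in> Autc n"
    and e0: "tau s1 0 = tau s2 0" and e1: "tau s1 1 = tau s2 1"
  shows "s1 = s2"
proof -
  have p1: "s1 permutes {1..n}" and p2: "s2 permutes {1..n}" using a1 a2 Autc_perm by auto
  have T: "tau s1 x = tau s2 x" if "x < n" for x
    using that
  proof (induction x rule: less_induct)
    case (less x)
    note x = less.prems
    show "tau s1 x = tau s2 x"
    proof (cases "x < 2")
      case True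
      then have "x = 0 \<or> x = 1" by auto
      then show ?thesis using e0 e1 by auto
    next
      case False
      have x1: "x - 1 < n" "x - 2 < n" using x by auto
      have lt: "x - 1 < x" "x - 2 < x" using False by auto
      define w where "w = tau s1 (x - 1)"
      have w2: "w = tau s2 (x - 1)" using less.IH[OF lt(1) x1(1)] unfolding w_def .
      have z2: "tau s1 (x - 2) = tau s2 (x - 2)" using less.IH[OF lt(2) x1(2)] .
      have nb1: "nb n (x - 1) x" "nb n (x - 1) (x - 2)" using False unfolding nb_def by auto
      have A: "nb n w (tau s1 x)" using Autc_rule[OF a1 x1(1) x] nb1(1) unfolding w_def by simp
      have B: "nb n w (tau s2 x)" using Autc_rule[OF a2 x1(1) x] nb1(1) unfolding w2 by simp
      have C: "nb n w (tau s1 (x - 2))" using Autc_rule[OF a1 x1] nb1(2) unfolding w_def by simp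
      have ne: "x \<noteq> x - 2" using False by auto
      have D: "tau s1 x \<noteq> tau s1 (x - 2)" using tau_inj[OF p1 x x1(2)] ne by blast
      have E: "tau s2 x \<noteq> tau s1 (x - 2)" using tau_inj[OF p2 x x1(2)] ne unfolding z2 by blast
      have wn: "w < n" unfolding w_def using tau_basic(1)[OF p1 x1(1)] .
      show ?thesis
        using nb_three[OF n wn tau_basic(1)[OF p1 x] tau_basic(1)[OF p2 x] tau_basic(1)[OF p1 x1(2)] A B C D E] .
    qed
  qed
  show ?thesis
  proof (rule ext)
    fix i
    show "s1 i = s2 i"
    proof (cases "i \<in> {1..n}")
      case True
      then obtain x where x: "i = Suc x" "x < n" by (cases i) auto
      have "s1 i = Suc (tau s1 x)" using tau_basic(2)[OF p1 x(2)] x(1) by simp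
      also have "\<dots> = Suc (tau s2 x)" using T[OF x(2)] by simp
      also have "\<dots> = s2 i" using tau_basic(2)[OF p2 x(2)] x(1) by simp
      finally show ?thesis .
    next
      case False
      then show ?thesis using permutes_not_in[OF p1 False] permutes_not_in[OF p2 False] by simp
    qed
  qed
qed

lemma Autc_dihedral:
  assumes n: "n \<ge> 3" and s: "s \<in> Autc n"
  shows "s \<in> dihedral n"
proof -
  have p: "s permutes {1..n}" using s Autc_perm by auto
  define x0 where "x0 = tau s 0"
  have x0: "x0 < n" unfolding x0_def using tau_basic(1)[OF p] n by auto
  have "nb n 0 1" unfolding nb_def by auto
  then have "nb n x0 (tau s 1)" using Autc_rule[OF s, of 0 1] n unfolding x0_def by auto
  then have c: "tau s 1 = sc n x0 \<or> tau s 1 = pd n x0"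
    using nb_cases[OF n x0] tau_basic(1)[OF p, of 1] n by auto
  then show ?thesis
  proof
    assume A: "tau s 1 = sc n x0"
    have r: "rk n x0 \<in> Autc n" using dihedral_Autc[OF n rk_dihedral[OF n]] .
    have "s = rk n x0"
    proof (rule Autc_unique[OF n s r])
      show "tau s 0 = tau (rk n x0) 0" using x0 n by (simp add: tau_rk x0_def)
      have "(1 + x0) mod n = sc n x0" using x0 unfolding sc_def by auto
      then show "tau s 1 = tau (rk n x0) 1" using A n by (simp add: tau_rk)
    qed
    then show ?thesis using rk_dihedral[OF n] by simp
  next
    assume A: "tau s 1 = pd n x0"
    define r where "r = rk n (x0 + 1) \<circ> refl_perm n"
    have rd: "r \<in> dihedral n" unfolding r_def dihedral_def
      using generate.eng[of "rk n (x0 + 1)" "sym_group n" "{rot_perm n, refl_perm n}" "refl_perm n"]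
        rk_dihedral[OF n, of "x0 + 1"] generate.incl[of "refl_perm n" "{rot_perm n, refl_perm n}" "sym_group n"]
      unfolding dihedral_def sym_group_mult by blast
    have r: "r \<in> Autc n" using dihedral_Autc[OF n rd] .
    have pr: "refl_perm n permutes {1..n}" using refl_Autc[OF n] Autc_perm by auto
    have "s = r"
    proof (rule Autc_unique[OF n s r])
      have "tau r 0 = (n - 1 + (x0 + 1)) mod n" unfolding r_def using n
        by (simp add: tau_comp[OF pr] tau_refl tau_rk)
      also have "\<dots> = x0" using x0 n by simp
      finally show "tau s 0 = tau r 0" unfolding x0_def by simp
      have "tau r 1 = (n - 1 - 1 + (x0 + 1)) mod n" unfolding r_def using n
        by (simp add: tau_comp[OF pr] tau_refl tau_rk)
      also have "\<dots> = pd n x0"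
      proof (cases "x0 = 0")
        case True then show ?thesis using n by (simp add: pd_def)
      next
        case False
        then have "n - 1 - 1 + (x0 + 1) = n + (x0 - 1)" using n by auto
        then have "(n - 1 - 1 + (x0 + 1)) mod n = (n + (x0 - 1)) mod n" by (simp only:)
        also have "\<dots> = x0 - 1" using x0 by simp
        also have "\<dots> = pd n x0" using False by (simp add: pd_def)
        finally show ?thesis .
      qed
      finally show "tau s 1 = tau r 1" using A by simp
    qed
    then show ?thesis using rd by simp
  qed
qed

lemma dihedral_eq: "n \<ge> 3 \<Longrightarrow> dihedral n = Autc n"
  using dihedral_Autc Autc_dihedral by blast




lemma Autc_edge: "s \<in> Autc n \<Longrightarrow> x < n \<Longrightarrow> y < n \<Longrightarrow> edge n (tau s x) (tau s y) = edge n x y"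
  unfolding edge_def using Autc_rule[of s n x y] tau_inj[OF Autc_perm, of s n x y] by auto

lemma diag_perm_monm:
  assumes p: "s permutes {1..n}"
  shows "diag_matrix n d * perm_matrix n s = monm n (tau s) (\<lambda>b. d (tau s b))"
proof (rule eq_matI)
  fix a b assume "a < dim_row (monm n (tau s) (\<lambda>b. d (tau s b)))" "b < dim_col (monm n (tau s) (\<lambda>b. d (tau s b)))"
  then have a: "a < n" and b: "b < n" by auto
  have eq: "(a + 1 = s (b + 1)) = (a = tau s b)" using tau_basic(2)[OF p b] by auto
  have "(diag_matrix n d * perm_matrix n s) $$ (a,b) = (\<Sum>c\<in>{0..<n}. diag_matrix n d $$ (a,c) * perm_matrix n s $$ (c,b))"
    using a b by (simp add: diag_matrix_def perm_matrix_def scalar_prod_def)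
  also have "\<dots> = (\<Sum>c\<in>{0..<n}. if c = a then d a * perm_matrix n s $$ (a,b) else 0)"
    using a b by (intro sum.cong refl) (auto simp: diag_matrix_def)
  also have "\<dots> = d a * perm_matrix n s $$ (a,b)" using a by simp
  also have "\<dots> = monm n (tau s) (\<lambda>b. d (tau s b)) $$ (a,b)"
    using a b eq by (auto simp: perm_matrix_def monm_entry)
  finally show "(diag_matrix n d * perm_matrix n s) $$ (a,b) = monm n (tau s) (\<lambda>b. d (tau s b)) $$ (a,b)" .
qed (auto simp: diag_matrix_def perm_matrix_def)

lemma tau_inv_l: "s permutes {1..n} \<Longrightarrow> x < n \<Longrightarrow> tau s (tau (inv' s) x) = x"
proof -
  assume p: "s permutes {1..n}" and x: "x < n"
  have pi: "inv' s permutes {1..n}" using permutes_inv[OF p] .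
  have "s (inv' s (Suc x)) = Suc x" using permutes_inverses(1)[OF p] .
  then have "s (Suc (tau (inv' s) x)) = Suc x" using tau_basic(2)[OF pi x] by simp
  then show ?thesis unfolding tau_def by simp
qed

lemma tau_inv_r: "s permutes {1..n} \<Longrightarrow> x < n \<Longrightarrow> tau (inv' s) (tau s x) = x"
proof -
  assume p: "s permutes {1..n}" and x: "x < n"
  have "inv' s (s (Suc x)) = Suc x" using permutes_inverses(2)[OF p] .
  then have "inv' s (Suc (tau s x)) = Suc x" using tau_basic(2)[OF p x] by simp
  then show ?thesis unfolding tau_def by simp
qed

lemma monm_in_Aut:
  fixes d :: "nat \<Rightarrow> 'k::field"
  assumes two: "(2::'k) \<noteq> 0" and n: "n \<ge> 3" and s: "s \<in> Autc n" and d: "\<And>i. i < n \<Longrightarrow> d i \<noteq> 0"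
  shows "monm n (tau s) (\<lambda>b. d (tau s b)) \<in> carrier (Aut_gr n (qm n))"
proof -
  have p: "s permutes {1..n}" using s Autc_perm by auto
  let ?t = "tau s" and ?t' = "tau (inv' s)"
  have s': "inv' s \<in> Autc n" using Autc_inv[OF s] .
  have p': "inv' s permutes {1..n}" using permutes_inv[OF p] .
  define g :: "'k mat" where "g = monm n ?t (\<lambda>b. d (?t b))"
  define h :: "'k mat" where "h = monm n ?t' (\<lambda>b. inverse (d (?t (?t' b))))"
  have "g * h = monm n (?t \<circ> ?t') (\<lambda>b. d (?t (?t' b)) * inverse (d (?t (?t' b))))"
    unfolding g_def h_def by (rule monm_mult) (use tau_basic(1)[OF p'] in auto)
  also have "\<dots> = monm n (\<lambda>x. x) (\<lambda>_. 1)"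
    by (rule monm_cong) (auto simp: tau_inv_l[OF p] d)
  finally have gh: "g * h = 1\<^sub>m n" using monm_id by metis
  have "h * g = monm n (?t' \<circ> ?t) (\<lambda>b. inverse (d (?t (?t' (?t b)))) * d (?t b))"
    unfolding g_def h_def by (rule monm_mult) (use tau_basic(1)[OF p] in auto)
  also have "\<dots> = monm n (\<lambda>x. x) (\<lambda>_. 1)"
    by (rule monm_cong) (auto simp: tau_inv_r[OF p] d tau_basic(1)[OF p])
  finally have hg: "h * g = 1\<^sub>m n" using monm_id by metis
  have pg: "preserves_rel n (qm n) g"
    unfolding g_def by (rule Cnd_preserves[OF qm_param two monm_carrier]) (rule monm_Cnd; use Autc_edge[OF s] in auto)
  have ph: "preserves_rel n (qm n) h"
    unfolding h_def by (rule Cnd_preserves[OF qm_param two monm_carrier]) (rule monm_Cnd; use Autc_edge[OF s'] in auto)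
  show ?thesis unfolding Aut_gr_def g_def[symmetric] using gh hg pg ph
    by (auto simp: g_def h_def intro!: bexI[of _ h])
qed


lemma Aut_in_md:
  fixes g :: "'k::field mat"
  assumes two: "(2::'k) \<noteq> 0" and n: "n \<ge> 4" and gA: "g \<in> carrier (Aut_gr n (qm n))"
  shows "g \<in> carrier (monomial_dihedral n)"
proof -
  have n3: "n \<ge> 3" using n by auto
  obtain h where g: "g \<in> carrier_mat n n" and h: "h \<in> carrier_mat n n" and gh: "g * h = 1\<^sub>m n"
    and pg: "preserves_rel n (qm n) g"
    using gA unfolding Aut_gr_def by auto
  have C: "\<And>i j a b. i < n \<Longrightarrow> j < n \<Longrightarrow> a < n \<Longrightarrow> b < n \<Longrightarrow> Cnd (qm n) g i j a b = 0"
    using preserves_Cnd[OF qm_param two g pg] by blast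
  have "det g * det h = 1" using det_mult[OF g h] gh by simp
  then have "det g \<noteq> 0" by auto
  then have "(\<Sum>p\<in>{p. p permutes {0..<n}}. signof p * (\<Prod>i = 0..<n. g $$ (i, p i))) \<noteq> 0"
    using g unfolding det_def by auto
  then obtain p where pp: "p permutes {0..<n}" and "signof p * (\<Prod>i = 0..<n. g $$ (i, p i)) \<noteq> 0"
    by (rule sum.not_neutral_contains_not_neutral) auto
  then have gp: "\<And>i. i < n \<Longrightarrow> g $$ (i, p i) \<noteq> 0" by auto
  have pn: "\<And>x. x < n \<Longrightarrow> p x < n" using permutes_in_image[OF pp] by auto
  have pinj: "inj_on p {..<n}" using permutes_inj[OF pp] by (auto simp: inj_on_def dest: injD)
  have fw: "nb n (p x) (p y)" if xy: "x < n" "y < n" "nb n x y" for x y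
  proof (rule ccontr)
    assume nn: "\<not> nb n (p x) (p y)"
    have "x \<noteq> y" using xy nb_irrefl[OF n3] by auto
    then have "p x \<noteq> p y" using pinj xy by (auto dest: inj_onD)
    then have e: "edge n (p y) (p x)" using nn edge_sym unfolding edge_def by (metis nb_sym)
    have ne: "\<not> edge n x y" using xy unfolding edge_def by auto
    have "g $$ (x, p x) * g $$ (y, p y) = 0"
      using edge_zero[OF two C pn[OF xy(2)] pn[OF xy(1)] xy(1) xy(2) e ne] .
    then show False using gp xy by auto
  qed
  have bw: "nb n x y" if "x < n" "y < n" "nb n (p x) (p y)" for x y
    using perm_nb_back[OF n3 pinj pn fw that] by blast
  have pedge: "edge n (p x) (p y) = edge n x y" if "x < n" "y < n" for x y
  proof -
    have "(p x = p y) = (x = y)" using pinj that by (auto dest: inj_onD)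
    moreover have "nb n (p x) (p y) = nb n x y" using fw bw that by blast
    ultimately show ?thesis unfolding edge_def by simp
  qed
  define pi where "pi = inv' p"
  have pip: "p (pi c) = c" for c unfolding pi_def using permutes_inverses(1)[OF pp] .
  have ppi: "pi (p c) = c" for c unfolding pi_def using permutes_inverses(2)[OF pp] .
  have pin: "pi c < n" if "c < n" for c
    using permutes_in_image[OF permutes_inv[OF pp], of c] that unfolding pi_def by auto
  have supp: "c = p a" if ac: "a < n" "c < n" "g $$ (a,c) \<noteq> 0" for a c
  proof -
    define v where "v = pi c"
    have v: "v < n" "p v = c" using pin[OF ac(2)] pip unfolding v_def by auto
    have "a = v"
    proof (rule common_nb[OF n v(1) ac(1)])
      fix y assume y: "y < n" and ev: "edge n v y"
      have ec: "edge n (p y) c" using pedge[OF v(1) y] ev v(2) edge_sym by metis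
      show "edge n a y"
      proof (rule ccontr)
        assume "\<not> edge n a y"
        then have "g $$ (a, c) * g $$ (y, p y) = 0"
          using edge_zero[OF two C pn[OF y] ac(2) ac(1) y ec] by blast
        then show False using ac gp[OF y] by auto
      qed
    qed
    then show ?thesis using v by simp
  qed
  define e where "e b = g $$ (pi b, b)" for b
  have gm: "g = monm n pi e"
  proof (rule eq_matI)
    fix a b assume "a < dim_row (monm n pi e)" "b < dim_col (monm n pi e)"
    then have a: "a < n" and b: "b < n" by auto
    show "g $$ (a,b) = monm n pi e $$ (a,b)"
    proof (cases "a = pi b")
      case True then show ?thesis using a b by (simp add: monm_entry e_def)
    next
      case False
      then have "g $$ (a,b) = 0" using supp[OF a b] ppi by metis
      then show ?thesis using a b False by (simp add: monm_entry)
    qed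
  qed (use g in auto)
  have enz: "e b \<noteq> 0" if "b < n" for b
    using gp[OF pin[OF that]] pip unfolding e_def by simp
  define s where "s i = (if 1 \<le> i \<and> i \<le> n then Suc (pi (i - 1)) else i)" for i
  have pi_inj: "inj_on pi {..<n}" by (metis inj_on_inverseI pip)
  have sp: "s permutes {1..n}"
  proof (rule perm_from_inj)
    show "inj_on s {1..n}"
    proof (rule inj_onI)
      fix x y assume "x \<in> {1..n}" "y \<in> {1..n}" "s x = s y"
      then show "x = y" unfolding s_def using pi_inj by (auto dest: inj_onD)
    qed
  qed (auto simp: s_def Suc_le_eq intro!: pin)
  have ts: "tau s x = pi x" if "x < n" for x using that unfolding tau_def s_def by auto
  have sA: "s \<in> Autc n"
  proof (rule AutcI[OF sp])
    fix x y assume xy: "x < n" "y < n"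
    have "nb n (pi x) (pi y) = nb n (p (pi x)) (p (pi y))" using fw bw pin xy by blast
    then show "nb n (tau s x) (tau s y) = nb n x y" using ts xy pip by simp
  qed
  define d where "d a = e (p a)" for a
  have dnz: "d a \<noteq> 0" if "a < n" for a unfolding d_def using enz pn that by auto
  have "diag_matrix n d * perm_matrix n s = monm n (tau s) (\<lambda>b. d (tau s b))"
    using diag_perm_monm[OF sp] .
  also have "\<dots> = monm n pi e" by (rule monm_cong) (auto simp: ts d_def pip)
  finally have "g = diag_matrix n d * perm_matrix n s" using gm by simp
  moreover have "s \<in> dihedral n" using dihedral_eq[OF n3] sA by simp
  ultimately show ?thesis unfolding monomial_dihedral_def using dnz by auto
qed


theorem proposition3p3:
  fixes n :: nat
  assumes "(2::'k::field) \<noteq> 0"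
    and "n \<ge> 4"
  shows "\<exists>q :: 'k mat. quantum_param n q \<and> Aut_gr n q \<cong> (monomial_dihedral n :: 'k mat monoid)"
proof -
  note two = assms(1) and n = assms(2)
  have n3: "n \<ge> 3" using n by auto
  have ceq: "carrier (Aut_gr n (qm n)) = carrier (monomial_dihedral n :: 'k mat monoid)"
  proof
    show "carrier (Aut_gr n (qm n)) \<subseteq> carrier (monomial_dihedral n :: 'k mat monoid)"
      using Aut_in_md[OF two n] by blast
    show "carrier (monomial_dihedral n :: 'k mat monoid) \<subseteq> carrier (Aut_gr n (qm n))"
    proof
      fix g :: "'k mat" assume "g \<in> carrier (monomial_dihedral n)"
      then obtain d s where g: "g = diag_matrix n d * perm_matrix n s" and d: "\<forall>i<n. d i \<noteq> 0"
        and s: "s \<in> dihedral n" unfolding monomial_dihedral_def by auto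
      have sA: "s \<in> Autc n" using s dihedral_eq[OF n3] by simp
      have "g = monm n (tau s) (\<lambda>b. d (tau s b))" using g diag_perm_monm[OF Autc_perm[OF sA]] by simp
      then show "g \<in> carrier (Aut_gr n (qm n))" using monm_in_Aut[OF two n3 sA] d by auto
    qed
  qed
  have eq: "Aut_gr n (qm n) = (monomial_dihedral n :: 'k mat monoid)"
    using ceq unfolding Aut_gr_def monomial_dihedral_def by simp
  show ?thesis using qm_param[of n] eq iso_refl by metis
qed


end
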